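(* Let $\mathcal{P}\subseteq\mathbb{Z}_{\geq0}$, working with formal power series over a commutative ring $R\supseteq\mathbb{Q}$. Then $$\Xi^{\mathrm{COMP},\mathcal{P}}(z)=F^{\mathcal{P}}(z)\ln F^{\mathcal{P}}(z).$$
   Context: $[n]=\{1,\dots,n\}$. $\mathcal{F}_n$ is the set of functions $f:[n]\to[n]$ with $|f^{-1}(x)|\in\mathcal{P}$ for all $x\in[n]$ ($\mathcal{F}_0$ = the empty function); $c(f)$ is the number of weakly connected components of the functional graph (edges $i\to f(i)$). $F^\mathcal{P}(z)=\sum_n|\mathcal{F}_n|z^n/n!$, $F^{\mathrm{COMP},\mathcal{P}}(u,z)=\sum_n\frac{z^n}{n!}\sum_{f\in\mathcal{F}_n}u^{c(f)}$, and $\Xi^{\mathrm{COMP},\mathcal{P}}(z)=\big(\partial_uF^{\mathrm{COMP},\mathcal{P}}(u,z)\big)|_{u=1}$. For a series $G$ with constant term $1$, $\ln G=\sum_{i\ge1}(1-G)^i/i\cdot(-1)^{0}$ computed as $\ln\big((1-(1-G))^{-1}\big)$ with $\ln((1-w)^{-1})=\sum_{i\ge1}w^i/i$. *)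

theory Defs
  imports "HOL-Library.FuncSet" "HOL-Computational_Algebra.Formal_Power_Series"
          "HOL-Computational_Algebra.Polynomial"
begin

text \<open>Coefficient ring: a commutative ring containing the rationals, i.e. a
  comm_ring_1 in which every positive integer is invertible.\<close>

definition natinv :: "nat \<Rightarrow> 'a::comm_ring_1" where
  "natinv k = (SOME x. of_nat k * x = 1)"

definition Pfuns :: "nat set \<Rightarrow> nat \<Rightarrow> (nat \<Rightarrow> nat) set" where
  "Pfuns P n = {f \<in> {1..n} \<rightarrow>\<^sub>E {1..n}.
                  \<forall>x\<in>{1..n}. card {i \<in> {1..n}. f i = x} \<in> P}"

definition ncomp :: "nat \<Rightarrow> (nat \<Rightarrow> nat) \<Rightarrow> nat" where
  "ncomp n f = (let E = {(i, f i) | i. i \<in> {1..n}}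
                in card ({1..n} // ((E \<union> E\<inverse>)\<^sup>*)))"

definition FP :: "nat set \<Rightarrow> 'a::comm_ring_1 fps" where
  "FP P = Abs_fps (\<lambda>n. of_nat (card (Pfuns P n)) * natinv (fact n))"

text \<open>Bivariate series F^COMP(u,z): coefficient of z^n is a polynomial in u.\<close>
definition FCOMP :: "nat set \<Rightarrow> 'a::comm_ring_1 poly fps" where
  "FCOMP P = Abs_fps (\<lambda>n. \<Sum>f\<in>Pfuns P n. monom (natinv (fact n)) (ncomp n f))"

text \<open>Formal derivative in u of a polynomial, evaluated at u = 1.\<close>
definition dpoly_at1 :: "'a::comm_ring_1 poly \<Rightarrow> 'a" where
  "dpoly_at1 p = (\<Sum>k\<le>degree p. of_nat k * coeff p k)"

definition XiCOMP :: "nat set \<Rightarrow> 'a::comm_ring_1 fps" where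
  "XiCOMP P = Abs_fps (\<lambda>n. dpoly_at1 (fps_nth (FCOMP P) n))"

text \<open>ln G = - sum_{i>=1} (1-G)^i / i for G with constant term 1; the sum is
  formally convergent since (1-G)^i has subdegree >= i.\<close>
definition fps_ln1 :: "'a::comm_ring_1 fps \<Rightarrow> 'a fps" where
  "fps_ln1 G = Abs_fps (\<lambda>n. - (\<Sum>i=1..n. natinv i * fps_nth ((1 - G) ^ i) n))"

end

theory Submission
  imports Defs
begin

unbundle fps_syntax


definition PF :: "nat set \<Rightarrow> 'b set \<Rightarrow> ('b \<Rightarrow> 'b) set" where
  "PF P S = {f \<in> S \<rightarrow>\<^sub>E S. \<forall>x\<in>S. card {i \<in> S. f i = x} \<in> P}"

definition rel :: "'b set \<Rightarrow> ('b \<Rightarrow> 'b) \<Rightarrow> ('b \<times> 'b) set" where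
  "rel S f = (let E = {(i, f i) | i. i \<in> S} in (E \<union> E\<inverse>)\<^sup>*)"

definition comps :: "'b set \<Rightarrow> ('b \<Rightarrow> 'b) \<Rightarrow> 'b set set" where
  "comps S f = S // rel S f"

definition fclosed :: "'b set \<Rightarrow> ('b \<Rightarrow> 'b) \<Rightarrow> 'b set \<Rightarrow> bool" where
  "fclosed S f T \<longleftrightarrow> T \<subseteq> S \<and> (\<forall>i\<in>S. i \<in> T \<longleftrightarrow> f i \<in> T)"

definition conn :: "'b set \<Rightarrow> ('b \<Rightarrow> 'b) \<Rightarrow> bool" where
  "conn S f \<longleftrightarrow> S \<noteq> {} \<and> (\<forall>T. fclosed S f T \<longrightarrow> T = {} \<or> T = S)"

definition CF :: "nat set \<Rightarrow> 'b set \<Rightarrow> ('b \<Rightarrow> 'b) set" where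
  "CF P S = {f \<in> PF P S. conn S f}"

definition compset :: "'b set \<Rightarrow> ('b \<Rightarrow> 'b) \<Rightarrow> 'b set \<Rightarrow> bool" where
  "compset S f K \<longleftrightarrow> fclosed S f K \<and> K \<noteq> {} \<and> (\<forall>T. fclosed S f T \<longrightarrow> T \<inter> K = {} \<or> K \<subseteq> T)"

lemma Pfuns_PF: "Pfuns P n = PF P {1..n}"
  unfolding Pfuns_def PF_def by simp

lemma ncomp_comps: "ncomp n f = card (comps {1..n} f)"
  unfolding ncomp_def comps_def rel_def Let_def by simp

lemma fclosed_rel:
  assumes "fclosed S f T" "x \<in> T" "(x, y) \<in> rel S f"
  shows "y \<in> T"
  using assms(3) unfolding rel_def Let_def
proof (induction rule: rtrancl_induct)
  case base then show ?case using assms(2) by simp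
next
  case (step y z)
  then have yT: "y \<in> T" by simp
  from step(2) show ?case
  proof
    assume "(y, z) \<in> {(i, f i) | i. i \<in> S}"
    then show ?thesis using yT assms(1) unfolding fclosed_def by auto
  next
    assume "(y, z) \<in> {(i, f i) | i. i \<in> S}\<inverse>"
    then show ?thesis using yT assms(1) unfolding fclosed_def by auto
  qed
qed

lemma fclosed_S: "f ` S \<subseteq> S \<Longrightarrow> fclosed S f S"
  unfolding fclosed_def by auto

lemma rel_edge1: "i \<in> S \<Longrightarrow> (x, i) \<in> rel S f \<Longrightarrow> (x, f i) \<in> rel S f"
  unfolding rel_def Let_def by (erule rtrancl_into_rtrancl) auto

lemma rel_edge2: "i \<in> S \<Longrightarrow> (x, f i) \<in> rel S f \<Longrightarrow> (x, i) \<in> rel S f"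
  unfolding rel_def Let_def by (erule rtrancl_into_rtrancl) auto

lemma rel_refl: "(x, x) \<in> rel S f"
  unfolding rel_def Let_def by simp

lemma rel_sym: "(x, y) \<in> rel S f \<Longrightarrow> (y, x) \<in> rel S f"
  unfolding rel_def Let_def using sym_rtrancl[OF sym_Un_converse] by (meson symD)

lemma rel_trans: "(x, y) \<in> rel S f \<Longrightarrow> (y, z) \<in> rel S f \<Longrightarrow> (x, z) \<in> rel S f"
  unfolding rel_def Let_def by simp

lemma class_closed:
  assumes "f ` S \<subseteq> S" "x \<in> S"
  shows "fclosed S f (rel S f `` {x})"
proof -
  have "rel S f `` {x} \<subseteq> S" using fclosed_rel[OF fclosed_S[OF assms(1)] assms(2)] by auto
  then show ?thesis unfolding fclosed_def using rel_edge1 rel_edge2 by auto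
qed

lemma comps_compset:
  assumes "f ` S \<subseteq> S"
  shows "comps S f = {K. compset S f K}"
proof (intro set_eqI iffI)
  fix K assume "K \<in> comps S f"
  then obtain x where x: "x \<in> S" "K = rel S f `` {x}" unfolding comps_def quotient_def by auto
  have "fclosed S f K" using class_closed[OF assms x(1)] x by simp
  moreover have "K \<noteq> {}" using x rel_refl[of x S f] by auto
  moreover have "T \<inter> K = {} \<or> K \<subseteq> T" if T: "fclosed S f T" for T
  proof (cases "T \<inter> K = {}")
    case False
    then obtain y where y: "y \<in> T" "(x, y) \<in> rel S f" using x by auto
    have "z \<in> T" if "z \<in> K" for z
      using fclosed_rel[OF T y(1)] rel_trans[OF rel_sym[OF y(2)]] that x by auto
    then show ?thesis by auto
  qed simp
  ultimately show "K \<in> {K. compset S f K}" unfolding compset_def by auto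
next
  fix K assume "K \<in> {K. compset S f K}"
  then have K: "fclosed S f K" "K \<noteq> {}" "\<And>T. fclosed S f T \<Longrightarrow> T \<inter> K = {} \<or> K \<subseteq> T"
    unfolding compset_def by auto
  then obtain x where x: "x \<in> K" by auto
  have xS: "x \<in> S" using K(1) x unfolding fclosed_def by auto
  have "K \<subseteq> rel S f `` {x}" using K(3)[OF class_closed[OF assms xS]] x rel_refl[of x S f] by auto
  moreover have "rel S f `` {x} \<subseteq> K" using fclosed_rel[OF K(1) x] by auto
  ultimately show "K \<in> comps S f" unfolding comps_def quotient_def using xS by auto
qed



lemma fclosed_restrict:
  assumes "fclosed S f K"
  shows "fclosed K (restrict f K) T \<longleftrightarrow> T \<subseteq> K \<and> fclosed S f T"
  using assms unfolding fclosed_def by auto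

lemma fclosed_Int: "fclosed S f T \<Longrightarrow> fclosed S f U \<Longrightarrow> fclosed S f (T \<inter> U)"
  unfolding fclosed_def by auto

lemma compset_conn:
  assumes "fclosed S f K"
  shows "compset S f K \<longleftrightarrow> conn K (restrict f K)"
proof
  assume c: "compset S f K"
  show "conn K (restrict f K)" unfolding conn_def
  proof (intro conjI allI impI)
    show "K \<noteq> {}" using c unfolding compset_def by auto
    fix T assume "fclosed K (restrict f K) T"
    then have "T \<subseteq> K" "fclosed S f T" using fclosed_restrict[OF assms] by auto
    then show "T = {} \<or> T = K" using c unfolding compset_def by blast
  qed
next
  assume c: "conn K (restrict f K)"
  have "T \<inter> K = {} \<or> K \<subseteq> T" if T: "fclosed S f T" for T
  proof -
    have "fclosed K (restrict f K) (T \<inter> K)"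
      using fclosed_restrict[OF assms] fclosed_Int[OF T assms] by auto
    then have "T \<inter> K = {} \<or> T \<inter> K = K" using c unfolding conn_def by blast
    then show ?thesis by auto
  qed
  then show "compset S f K" using c assms unfolding compset_def conn_def by auto
qed

lemma PF_split:
  assumes f: "f \<in> S \<rightarrow>\<^sub>E S" and K: "fclosed S f K"
  shows "f \<in> PF P S \<longleftrightarrow> restrict f K \<in> PF P K \<and> restrict f (S - K) \<in> PF P (S - K)"
proof -
  have KS: "K \<subseteq> S" and cl: "\<And>i. i \<in> S \<Longrightarrow> i \<in> K \<longleftrightarrow> f i \<in> K" using K unfolding fclosed_def by auto
  have fS: "\<And>i. i \<in> S \<Longrightarrow> f i \<in> S" using f by auto
  have r1: "restrict f K \<in> K \<rightarrow>\<^sub>E K" using cl KS by auto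
  have r2: "restrict f (S - K) \<in> (S - K) \<rightarrow>\<^sub>E (S - K)" using cl fS by auto
  have e1: "{i \<in> K. restrict f K i = x} = {i \<in> S. f i = x}" if "x \<in> K" for x
    using that cl KS by auto
  have e2: "{i \<in> S - K. restrict f (S - K) i = x} = {i \<in> S. f i = x}" if "x \<in> S - K" for x
    using that cl KS by auto
  show ?thesis
    unfolding PF_def using f r1 r2 e1 e2 KS by auto
qed

definition merge :: "'b set \<Rightarrow> 'b set \<Rightarrow> ('b \<Rightarrow> 'b) \<Rightarrow> ('b \<Rightarrow> 'b) \<Rightarrow> 'b \<Rightarrow> 'b" where
  "merge S K g h = (\<lambda>x. if x \<in> K then g x else if x \<in> S then h x else undefined)"

lemma PF_fin: "finite S \<Longrightarrow> finite (PF P S)"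
  unfolding PF_def by (rule finite_subset[OF _ finite_PiE]) auto

lemma CF_fin: "finite S \<Longrightarrow> finite (CF P S)"
  unfolding CF_def by (rule finite_subset[of _ "PF P S"]) (auto simp: PF_fin)

lemma comps_fin: "finite S \<Longrightarrow> finite (comps S f)"
  unfolding comps_def quotient_def by simp

lemma decomp:
  fixes w :: "'b set \<Rightarrow> nat"
  assumes S: "finite S"
  shows "(\<Sum>f\<in>PF P S. \<Sum>K\<in>comps S f. w K) = (\<Sum>K\<in>Pow S. w K * (card (CF P K) * card (PF P (S - K))))"
proof -
  have "(\<Sum>f\<in>PF P S. \<Sum>K\<in>comps S f. w K) = (\<Sum>(f, K)\<in>Sigma (PF P S) (comps S). w K)"
    by (rule sum.Sigma) (use S PF_fin comps_fin in auto)
  also have "\<dots> = (\<Sum>(K, gh)\<in>Sigma (Pow S) (\<lambda>K. CF P K \<times> PF P (S - K)). w K)"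
  proof (rule sum.reindex_bij_witness[where j = "\<lambda>(f, K). (K, (restrict f K, restrict f (S - K)))"
        and i = "\<lambda>(K, (g, h)). (merge S K g h, K)"])
    fix a assume a: "a \<in> Sigma (PF P S) (comps S)"
    obtain f K where fK: "a = (f, K)" by (cases a)
    have f: "f \<in> PF P S" and Kc: "K \<in> comps S f" using a fK by auto
    have fE: "f \<in> S \<rightarrow>\<^sub>E S" using f unfolding PF_def by auto
    then have fS: "f ` S \<subseteq> S" by auto
    have cs: "compset S f K" using Kc comps_compset[OF fS] by auto
    then have cl: "fclosed S f K" unfolding compset_def by auto
    then have KS: "K \<subseteq> S" unfolding fclosed_def by auto
    show "(case case a of (f, K) \<Rightarrow> (K, restrict f K, restrict f (S - K)) of
          (K, g, h) \<Rightarrow> (merge S K g h, K)) = a"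
    proof -
      have "merge S K (restrict f K) (restrict f (S - K)) = f"
      proof
        fix x show "merge S K (restrict f K) (restrict f (S - K)) x = f x"
          using PiE_arb[OF fE, of x] KS unfolding merge_def by auto
      qed
      then show ?thesis using fK by simp
    qed
    show "(case a of (f, K) \<Rightarrow> (K, restrict f K, restrict f (S - K)))
          \<in> Sigma (Pow S) (\<lambda>K. CF P K \<times> PF P (S - K))"
    proof -
      have "restrict f K \<in> CF P K" "restrict f (S - K) \<in> PF P (S - K)"
        using PF_split[OF fE cl, of P] f compset_conn[OF cl] cs unfolding CF_def by auto
      then show ?thesis using fK KS by simp
    qed
    show "(case case a of (f, K) \<Rightarrow> (K, restrict f K, restrict f (S - K)) of (K, gh) \<Rightarrow> w K) =
         (case a of (f, K) \<Rightarrow> w K)" using fK by simp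
  next
    fix b assume b: "b \<in> Sigma (Pow S) (\<lambda>K. CF P K \<times> PF P (S - K))"
    obtain K g h where b': "b = (K, g, h)" by (cases b) auto
    have KS: "K \<subseteq> S" and g: "g \<in> CF P K" and h: "h \<in> PF P (S - K)" using b b' by auto
    have gE: "g \<in> K \<rightarrow>\<^sub>E K" and hE: "h \<in> (S - K) \<rightarrow>\<^sub>E (S - K)" using g h unfolding CF_def PF_def by auto
    define f where "f = merge S K g h"
    have gK: "\<And>x. x \<in> K \<Longrightarrow> g x \<in> K" using gE by (auto simp: PiE_iff)
    have hK: "\<And>x. x \<in> S - K \<Longrightarrow> h x \<in> S - K" using hE by (auto simp: PiE_iff)
    have fK: "\<And>x. x \<in> K \<Longrightarrow> f x = g x" unfolding f_def merge_def by simp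
    have fSK: "\<And>x. x \<in> S - K \<Longrightarrow> f x = h x" unfolding f_def merge_def by simp
    have fO: "\<And>x. x \<notin> S \<Longrightarrow> f x = undefined" unfolding f_def merge_def using KS by auto
    have r1: "restrict f K = g"
    proof
      fix x show "restrict f K x = g x"
        using fK PiE_arb[OF gE, of x] by (cases "x \<in> K") simp_all
    qed
    have r2: "restrict f (S - K) = h"
    proof
      fix x show "restrict f (S - K) x = h x"
        using fSK PiE_arb[OF hE, of x] by (cases "x \<in> S - K") simp_all
    qed
    have fE: "f \<in> S \<rightarrow>\<^sub>E S"
    proof (rule PiE_I)
      fix x assume "x \<in> S" then show "f x \<in> S"
        using fK fSK gK hK KS by (cases "x \<in> K") auto
    qed (rule fO)
    have cl: "fclosed S f K" unfolding fclosed_def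
    proof (intro conjI ballI KS)
      fix i assume "i \<in> S" then show "i \<in> K \<longleftrightarrow> f i \<in> K"
        using fK fSK gK hK by (cases "i \<in> K") auto
    qed
    have fP: "f \<in> PF P S" using PF_split[OF fE cl, of P] r1 r2 g h by (auto simp: CF_def)
    have "compset S f K" using compset_conn[OF cl] r1 g by (auto simp: CF_def)
    then have "K \<in> comps S f" using comps_compset[of f S] fE by auto
    then show "(case b of (K, g, h) \<Rightarrow> (merge S K g h, K)) \<in> Sigma (PF P S) (comps S)"
      using fP b' f_def by auto
    show "(case case b of (K, g, h) \<Rightarrow> (merge S K g h, K) of
          (f, K) \<Rightarrow> (K, restrict f K, restrict f (S - K))) = b"
      using b' r1 r2 f_def by auto
  qed
  also have "\<dots> = (\<Sum>K\<in>Pow S. \<Sum>gh\<in>CF P K \<times> PF P (S - K). w K)"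
    by (rule sum.Sigma[symmetric]) (use S in \<open>auto intro!: finite_cartesian_product PF_fin CF_fin intro: finite_subset[OF _ S]\<close>)
  also have "\<dots> = (\<Sum>K\<in>Pow S. w K * (card (CF P K) * card (PF P (S - K))))"
    by (simp add: card_cartesian_product mult.commute)
  finally show ?thesis .
qed




lemma relabel_le:
  assumes h: "bij_betw h S T" and T: "finite T"
  shows "card (PF P S) \<le> card (PF P T) \<and> card (CF P S) \<le> card (CF P T)"
proof -
  define h' where "h' = inv_into S h"
  have h'T: "\<And>y. y \<in> T \<Longrightarrow> h' y \<in> S" and hh': "\<And>y. y \<in> T \<Longrightarrow> h (h' y) = y"
    using h unfolding h'_def bij_betw_def by (auto intro: inv_into_into f_inv_into_f)
  have hS: "\<And>x. x \<in> S \<Longrightarrow> h x \<in> T" and h'h: "\<And>x. x \<in> S \<Longrightarrow> h' (h x) = x"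
    using h unfolding h'_def bij_betw_def by (auto intro: inv_into_f_f)
  have inj: "inj_on h S" using h unfolding bij_betw_def by auto
  have TS: "T = h ` S" using h unfolding bij_betw_def by auto
  define \<phi> where "\<phi> f = restrict (\<lambda>y. h (f (h' y))) T" for f :: "'a \<Rightarrow> 'a"
  have \<phi>h: "\<And>f x. x \<in> S \<Longrightarrow> \<phi> f (h x) = h (f x)" unfolding \<phi>_def using hS h'h by simp
  have PF: "\<phi> f \<in> PF P T" if f: "f \<in> PF P S" for f
  proof -
    have fE: "f \<in> S \<rightarrow>\<^sub>E S" using f unfolding PF_def by auto
    have fS: "\<And>x. x \<in> S \<Longrightarrow> f x \<in> S" using fE by auto
    have E: "\<phi> f \<in> T \<rightarrow>\<^sub>E T" unfolding \<phi>_def using fS h'T hS by auto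
    have fib: "{y \<in> T. \<phi> f y = x} = h ` {i \<in> S. f i = h' x}" if x: "x \<in> T" for x
    proof (intro set_eqI iffI)
      fix y assume y: "y \<in> {y \<in> T. \<phi> f y = x}"
      then have "h (f (h' y)) = x" "y \<in> T" unfolding \<phi>_def by auto
      then have "f (h' y) = h' x" using h'h fS h'T by metis
      then show "y \<in> h ` {i \<in> S. f i = h' x}" using \<open>y \<in> T\<close> h'T hh' by (metis (mono_tags, lifting) image_eqI mem_Collect_eq)
    next
      fix y assume "y \<in> h ` {i \<in> S. f i = h' x}"
      then obtain i where i: "i \<in> S" "f i = h' x" "y = h i" by auto
      then show "y \<in> {y \<in> T. \<phi> f y = x}" using \<phi>h hS hh' x by auto
    qed
    have "card {y \<in> T. \<phi> f y = x} \<in> P" if x: "x \<in> T" for x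
    proof -
      have "card {y \<in> T. \<phi> f y = x} = card {i \<in> S. f i = h' x}"
        unfolding fib[OF x] by (rule card_image) (rule inj_on_subset[OF inj], auto)
      then show ?thesis using f h'T[OF x] unfolding PF_def by auto
    qed
    then show ?thesis using E unfolding PF_def by auto
  qed
  have CF: "\<phi> f \<in> CF P T" if f: "f \<in> CF P S" for f
  proof -
    have fP: "f \<in> PF P S" and c: "conn S f" using f unfolding CF_def by auto
    have fS: "\<And>x. x \<in> S \<Longrightarrow> f x \<in> S" using fP unfolding PF_def by auto
    have "conn T (\<phi> f)" unfolding conn_def
    proof (intro conjI allI impI)
      show "T \<noteq> {}" using c TS unfolding conn_def by auto
      fix U assume U: "fclosed T (\<phi> f) U"
      define V where "V = {i \<in> S. h i \<in> U}"
      have "fclosed S f V" unfolding fclosed_def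
      proof (intro conjI ballI)
        show "V \<subseteq> S" unfolding V_def by auto
        fix i assume i: "i \<in> S"
        have "h i \<in> U \<longleftrightarrow> \<phi> f (h i) \<in> U" using U hS[OF i] unfolding fclosed_def by auto
        then show "i \<in> V \<longleftrightarrow> f i \<in> V" unfolding V_def using i fS \<phi>h by auto
      qed
      then have "V = {} \<or> V = S" using c unfolding conn_def by auto
      moreover have "U \<subseteq> T" using U unfolding fclosed_def by auto
      ultimately show "U = {} \<or> U = T" unfolding V_def TS by auto
    qed
    then show ?thesis using PF[OF fP] unfolding CF_def by auto
  qed
  have injphi: "inj_on \<phi> (PF P S)"
  proof
    fix f1 f2 assume f1: "f1 \<in> PF P S" and f2: "f2 \<in> PF P S" and e: "\<phi> f1 = \<phi> f2"
    have E1: "f1 \<in> S \<rightarrow>\<^sub>E S" and E2: "f2 \<in> S \<rightarrow>\<^sub>E S" using f1 f2 unfolding PF_def by auto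
    show "f1 = f2"
    proof
      fix x show "f1 x = f2 x"
      proof (cases "x \<in> S")
        case True
        then have "h (f1 x) = h (f2 x)" using \<phi>h e by metis
        then show ?thesis using inj True E1 E2 unfolding inj_on_def by blast
      next
        case False then show ?thesis using PiE_arb[OF E1] PiE_arb[OF E2] by simp
      qed
    qed
  qed
  have "card (PF P S) \<le> card (PF P T)"
    by (rule card_inj_on_le[OF injphi]) (use PF PF_fin[OF T] in auto)
  moreover have "card (CF P S) \<le> card (CF P T)"
    by (rule card_inj_on_le[OF inj_on_subset[OF injphi]]) (use CF CF_fin[OF T] in \<open>auto simp: CF_def\<close>)
  ultimately show ?thesis by auto
qed

lemma relabel:
  assumes "finite S" "finite T" "card S = card T"
  shows "card (PF P S) = card (PF P T) \<and> card (CF P S) = card (CF P T)"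
proof -
  obtain h where h: "bij_betw h S T" using finite_same_card_bij[OF assms] by auto
  have h2: "bij_betw (inv_into S h) T S" using bij_betw_inv_into[OF h] .
  show ?thesis using relabel_le[OF h assms(2), of P] relabel_le[OF h2 assms(1), of P] by auto
qed

lemma sum_card_comps:
  assumes S: "finite S" and fS: "f ` S \<subseteq> S"
  shows "(\<Sum>K\<in>comps S f. card K) = card S"
proof -
  have U: "\<Union>(comps S f) = S"
  proof
    show "\<Union>(comps S f) \<subseteq> S" using comps_compset[OF fS] unfolding compset_def fclosed_def by auto
    show "S \<subseteq> \<Union>(comps S f)"
    proof
      fix x assume "x \<in> S"
      then show "x \<in> \<Union>(comps S f)" unfolding comps_def quotient_def using rel_refl[of x S f] by auto
    qed
  qed
  have "pairwise disjnt (comps S f)"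
  proof (rule pairwiseI)
    fix K1 K2 assume K: "K1 \<in> comps S f" "K2 \<in> comps S f" "K1 \<noteq> K2"
    then have c: "compset S f K1" "compset S f K2" using comps_compset[OF fS] by auto
    show "disjnt K1 K2"
    proof (rule ccontr)
      assume "\<not> disjnt K1 K2"
      then have "K1 \<inter> K2 \<noteq> {}" by (auto simp: disjnt_def)
      then have "K1 \<subseteq> K2" "K2 \<subseteq> K1" using c unfolding compset_def by blast+
      then show False using K by auto
    qed
  qed
  moreover have "finite A" if "A \<in> comps S f" for A
    using U S that by (metis Union_upper finite_subset)
  ultimately have "card (\<Union>(comps S f)) = sum card (comps S f)" by (rule card_Union_disjoint)
  then show ?thesis using U by simp
qed




lemma sum_Pow_card:
  fixes g :: "nat \<Rightarrow> nat"
  assumes S: "finite S"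
  shows "(\<Sum>K\<in>Pow S. g (card K)) = (\<Sum>k\<le>card S. (card S choose k) * g k)"
proof -
  have "(\<Sum>K\<in>Pow S. g (card K)) = (\<Sum>k\<le>card S. \<Sum>K\<in>{K. K \<in> Pow S \<and> card K = k}. g (card K))"
    by (rule sum.group[symmetric]) (use S in \<open>auto intro: card_mono\<close>)
  also have "\<dots> = (\<Sum>k\<le>card S. (card S choose k) * g k)"
  proof (rule sum.cong[OF refl])
    fix k
    have "(\<Sum>K\<in>{K. K \<in> Pow S \<and> card K = k}. g (card K)) = (\<Sum>K\<in>{K. K \<subseteq> S \<and> card K = k}. g k)"
      by (rule sum.cong) auto
    also have "\<dots> = (card S choose k) * g k" using n_subsets[OF S, of k] by simp
    finally show "(\<Sum>K\<in>{K. K \<in> Pow S \<and> card K = k}. g (card K)) = (card S choose k) * g k" .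
  qed
  finally show ?thesis .
qed

definition aa :: "nat set \<Rightarrow> nat \<Rightarrow> nat" where "aa P n = card (PF P {1..n})"
definition cc :: "nat set \<Rightarrow> nat \<Rightarrow> nat" where "cc P n = card (CF P {1..n})"

lemma decomp_num:
  fixes w :: "nat \<Rightarrow> nat"
  shows "(\<Sum>f\<in>PF P {1..n}. \<Sum>K\<in>comps {1..n} f. w (card K)) =
         (\<Sum>k\<le>n. (n choose k) * (w k * (cc P k * aa P (n - k))))"
proof -
  let ?S = "{1..n::nat}"
  have "(\<Sum>f\<in>PF P ?S. \<Sum>K\<in>comps ?S f. w (card K)) =
        (\<Sum>K\<in>Pow ?S. w (card K) * (card (CF P K) * card (PF P (?S - K))))"
    by (rule decomp) simp
  also have "\<dots> = (\<Sum>K\<in>Pow ?S. (\<lambda>k. w k * (cc P k * aa P (n - k))) (card K))"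
  proof (rule sum.cong[OF refl])
    fix K assume K: "K \<in> Pow ?S"
    then have fK: "finite K" by (auto intro: finite_subset)
    have "card (CF P K) = cc P (card K)" unfolding cc_def using relabel[OF fK, of "{1..card K}"] by simp
    moreover have "card (PF P (?S - K)) = aa P (n - card K)" unfolding aa_def
      using relabel[of "?S - K" "{1..n - card K}"] K fK by (simp add: card_Diff_subset)
    ultimately show "w (card K) * (card (CF P K) * card (PF P (?S - K))) =
      (\<lambda>k. w k * (cc P k * aa P (n - k))) (card K)" by simp
  qed
  also have "\<dots> = (\<Sum>k\<le>n. (n choose k) * (w k * (cc P k * aa P (n - k))))"
    using sum_Pow_card[of ?S] by simp
  finally show ?thesis .
qed

lemma ident1: "(\<Sum>f\<in>Pfuns P n. ncomp n f) = (\<Sum>k\<le>n. (n choose k) * (cc P k * aa P (n - k)))"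
  using decomp_num[where w="\<lambda>_. 1" and P=P and n=n] by (simp add: Pfuns_PF ncomp_comps)

lemma ident2: "n * aa P n = (\<Sum>k\<le>n. (n choose k) * (k * (cc P k * aa P (n - k))))"
proof -
  have "(\<Sum>f\<in>PF P {1..n}. \<Sum>K\<in>comps {1..n} f. card K) = (\<Sum>f\<in>PF P {1..n}. n)"
  proof (rule sum.cong[OF refl])
    fix f assume "f \<in> PF P {1..n}"
    then have "f ` {1..n} \<subseteq> {1..n}" unfolding PF_def by auto
    then show "(\<Sum>K\<in>comps {1..n} f. card K) = n" using sum_card_comps[of "{1..n}" f] by simp
  qed
  then show ?thesis using decomp_num[where w=id and P=P and n=n] by (simp add: aa_def mult.commute)
qed






lemma pow_nth_zero:
  fixes G :: "'a::comm_ring_1 fps"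
  assumes G0: "G $ 0 = 0"
  shows "n < i \<Longrightarrow> (G ^ i) $ n = 0"
proof (induction i arbitrary: n)
  case 0 then show ?case by simp
next
  case (Suc i)
  have "(G ^ Suc i) $ n = (\<Sum>j=0..n. G $ j * (G ^ i) $ (n - j))" by (simp add: fps_mult_nth)
  also have "\<dots> = 0"
  proof (rule sum.neutral, rule ballI)
    fix j assume jn: "j \<in> {0..n}"
    show "G $ j * (G ^ i) $ (n - j) = 0"
    proof (cases "j = 0")
      case True then show ?thesis using G0 by simp
    next
      case False then have "n - j < i" using Suc.prems jn by auto
      then show ?thesis using Suc.IH by simp
    qed
  qed
  finally show ?case .
qed

lemma ln1_deriv:
  fixes F :: "'a::comm_ring_1 fps"
  assumes F0: "F $ 0 = 1"
  assumes ni: "\<And>k::nat. k > 0 \<Longrightarrow> of_nat k * (natinv k :: 'a) = 1"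
  shows "F * fps_deriv (fps_ln1 F) = fps_deriv F"
proof (rule fps_ext)
  fix m
  define N where "N = Suc m"
  define G where "G = 1 - F"
  have G0: "G $ 0 = 0" using F0 unfolding G_def by simp
  define LN where "LN = - (\<Sum>i<N. fps_const (natinv (Suc i)) * G ^ (Suc i))"
  have c1: "fps_ln1 F $ n = LN $ n" if n: "n \<le> N" for n
  proof -
    have "fps_ln1 F $ n = - (\<Sum>i\<in>{Suc 0..n}. natinv i * (G ^ i) $ n)"
      unfolding fps_ln1_def G_def by simp
    also have "\<dots> = - (\<Sum>i<n. natinv (Suc i) * (G ^ Suc i) $ n)"
      by (simp only: sum.atLeast1_atMost_eq)
    also have "\<dots> = - (\<Sum>i<N. natinv (Suc i) * (G ^ Suc i) $ n)"
    proof -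
      have "(\<Sum>i<n. natinv (Suc i) * (G ^ Suc i) $ n) = (\<Sum>i<N. natinv (Suc i) * (G ^ Suc i) $ n)"
      proof (rule sum.mono_neutral_left)
        show "\<forall>i\<in>{..<N} - {..<n}. natinv (Suc i) * (G ^ Suc i) $ n = 0"
        proof
          fix i assume "i \<in> {..<N} - {..<n}"
          then have "n < Suc i" by auto
          then show "natinv (Suc i) * (G ^ Suc i) $ n = 0" using pow_nth_zero[OF G0, of n "Suc i"] by (simp del: power_Suc)
        qed
      qed (use n in auto)
      then show ?thesis by simp
    qed
    also have "\<dots> = LN $ n" unfolding LN_def by (simp add: fps_sum_nth)
    finally show ?thesis .
  qed
  have dG: "fps_deriv G = - fps_deriv F" unfolding G_def by simp
  have c2: "fps_deriv LN = fps_deriv F * (\<Sum>i<N. G ^ i)"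
  proof -
    have "fps_deriv LN = - (\<Sum>i<N. fps_const (natinv (Suc i)) * fps_deriv (G ^ Suc i))"
      unfolding LN_def by (simp add: fps_deriv_sum)
    also have "\<dots> = - (\<Sum>i<N. fps_deriv G * G ^ i)"
    proof -
      have "fps_const (natinv (Suc i)) * fps_deriv (G ^ Suc i) = fps_deriv G * G ^ i" for i
      proof -
        have "fps_const (natinv (Suc i)) * fps_deriv (G ^ Suc i)
             = fps_const (natinv (Suc i) * of_nat (Suc i)) * fps_deriv G * G ^ i"
          by (simp only: fps_deriv_power fps_const_mult[symmetric] diff_Suc_1 mult.assoc)
        also have "natinv (Suc i) * of_nat (Suc i) = (1::'a)" using ni[of "Suc i"] by (simp add: mult.commute)
        finally show ?thesis by simp
      qed
      then show ?thesis by simp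
    qed
    also have "\<dots> = fps_deriv F * (\<Sum>i<N. G ^ i)" by (simp add: dG sum_distrib_left sum_negf)
    finally show ?thesis .
  qed
  have c3: "F * fps_deriv LN = fps_deriv F - fps_deriv F * G ^ N"
  proof -
    have "F * (\<Sum>i<N. G ^ i) = 1 - G ^ N" using one_diff_power_eq[of G N] unfolding G_def by simp
    then have "F * fps_deriv LN = fps_deriv F * (1 - G ^ N)" unfolding c2 by (metis mult.left_commute)
    then show ?thesis by (simp add: algebra_simps)
  qed
  have c4: "(F * fps_deriv (fps_ln1 F)) $ m = (F * fps_deriv LN) $ m"
    unfolding fps_mult_nth
  proof (rule sum.cong[OF refl])
    fix i assume "i \<in> {0..m}"
    then have "m - i + 1 \<le> N" unfolding N_def by auto
    then show "F $ i * fps_deriv (fps_ln1 F) $ (m - i) = F $ i * fps_deriv LN $ (m - i)"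
      using c1 by simp
  qed
  have c5: "(fps_deriv F * G ^ N) $ m = 0"
    unfolding fps_mult_nth
  proof (rule sum.neutral, rule ballI)
    fix i assume "i \<in> {0..m}"
    then have "m - i < N" unfolding N_def by auto
    then show "fps_deriv F $ i * (G ^ N) $ (m - i) = 0" using pow_nth_zero[OF G0, of "m - i" N] by simp
  qed
  show "(F * fps_deriv (fps_ln1 F)) $ m = fps_deriv F $ m"
    using c4 c3 c5 by simp
qed






lemma dpoly_at1_eq:
  assumes "degree p \<le> N"
  shows "dpoly_at1 p = (\<Sum>k\<le>N. of_nat k * coeff p k)"
  unfolding dpoly_at1_def
  by (rule sum.mono_neutral_left) (use assms in \<open>auto simp: coeff_eq_0\<close>)

lemma dpoly_add: "dpoly_at1 (p + q) = dpoly_at1 p + dpoly_at1 q"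
proof -
  define N where "N = max (degree p) (degree q)"
  have "degree (p + q) \<le> N" unfolding N_def by (rule degree_add_le) auto
  then have "dpoly_at1 (p + q) = (\<Sum>k\<le>N. of_nat k * coeff (p + q) k)" by (rule dpoly_at1_eq)
  also have "\<dots> = (\<Sum>k\<le>N. of_nat k * coeff p k) + (\<Sum>k\<le>N. of_nat k * coeff q k)"
    by (simp add: distrib_left sum.distrib)
  also have "\<dots> = dpoly_at1 p + dpoly_at1 q"
    using dpoly_at1_eq[of p N] dpoly_at1_eq[of q N] unfolding N_def by simp
  finally show ?thesis .
qed

lemma dpoly_monom: "dpoly_at1 (monom c m) = of_nat m * c"
proof -
  have "dpoly_at1 (monom c m) = (\<Sum>k\<le>m. of_nat k * coeff (monom c m) k)"
    by (rule dpoly_at1_eq) (simp add: degree_monom_le)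
  also have "\<dots> = (\<Sum>k\<le>m. if k = m then of_nat m * c else 0)"
    by (rule sum.cong) (auto simp: coeff_monom)
  also have "\<dots> = of_nat m * c" by simp
  finally show ?thesis .
qed

lemma dpoly_sum_monom:
  assumes "finite A"
  shows "dpoly_at1 (\<Sum>f\<in>A. monom c (m f)) = of_nat (\<Sum>f\<in>A. m f) * c"
  using assms
proof (induction A rule: finite_induct)
  case empty then show ?case by (simp add: dpoly_at1_def)
next
  case (insert x A) then show ?case by (simp add: dpoly_add dpoly_monom distrib_right)
qed

context
  fixes dummy :: "'a::comm_ring_1"
  assumes hinv: "\<And>k::nat. k > 0 \<Longrightarrow> \<exists>x::'a. of_nat k * x = 1"
begin

lemma ni: "k > 0 \<Longrightarrow> of_nat k * (natinv k :: 'a) = 1"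
  unfolding natinv_def using someI_ex[OF hinv] by blast

lemma ni_mult: "a > 0 \<Longrightarrow> b > 0 \<Longrightarrow> (natinv (a * b) :: 'a) = natinv a * natinv b"
proof -
  assume a: "a > 0" and b: "b > 0"
  have "(natinv a * natinv b :: 'a) = natinv a * natinv b * (of_nat (a * b) * natinv (a * b))"
    using ni[of "a * b"] a b by simp
  also have "\<dots> = (of_nat a * natinv a) * (of_nat b * natinv b) * natinv (a * b)"
    by (simp add: algebra_simps)
  also have "\<dots> = natinv (a * b)" using ni[OF a] ni[OF b] by simp
  finally show ?thesis by simp
qed

lemma binom_inv:
  assumes "k \<le> n"
  shows "of_nat (n choose k) * (natinv (fact n) :: 'a) = natinv (fact k) * natinv (fact (n - k))"
proof -
  have C: "(n choose k) > 0" using assms by simp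
  have "fact n = fact k * fact (n - k) * (n choose k)" using binomial_fact_lemma[OF assms] by simp
  then have "(natinv (fact n) :: 'a) = natinv (fact k) * natinv (fact (n - k)) * natinv (n choose k)"
    using ni_mult C by (simp add: fact_gt_zero)
  then have "of_nat (n choose k) * (natinv (fact n) :: 'a) =
     (of_nat (n choose k) * natinv (n choose k)) * (natinv (fact k) * natinv (fact (n - k)))"
    by (simp add: ac_simps)
  then show ?thesis using ni[OF C] by simp
qed

lemma term_eq:
  assumes "k \<le> n"
  shows "of_nat x * (natinv (fact k) :: 'a) * (of_nat y * natinv (fact (n - k))) =
         of_nat ((n choose k) * (x * y)) * natinv (fact n)"
  using binom_inv[OF assms] by (simp add: algebra_simps)

definition Cs :: "nat set \<Rightarrow> 'a fps" where
  "Cs P = Abs_fps (\<lambda>n. of_nat (cc P n) * natinv (fact n))"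

lemma FP_nth: "(FP P :: 'a fps) $ n = of_nat (aa P n) * natinv (fact n)"
  unfolding FP_def aa_def Pfuns_PF by simp

lemma Xi_eq: "(XiCOMP P :: 'a fps) = Cs P * FP P"
proof (rule fps_ext)
  fix n
  have "(XiCOMP P :: 'a fps) $ n = of_nat (\<Sum>f\<in>Pfuns P n. ncomp n f) * natinv (fact n)"
    unfolding XiCOMP_def FCOMP_def
    by (simp add: dpoly_sum_monom Pfuns_PF PF_fin)
  also have "\<dots> = (\<Sum>k\<le>n. of_nat ((n choose k) * (cc P k * aa P (n - k))) * natinv (fact n))"
    unfolding ident1 by (simp add: sum_distrib_right)
  also have "\<dots> = (\<Sum>k\<le>n. Cs P $ k * FP P $ (n - k))"
    by (rule sum.cong[OF refl]) (simp add: Cs_def FP_nth term_eq)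
  also have "\<dots> = (Cs P * FP P) $ n" by (simp add: fps_mult_nth atLeast0AtMost)
  finally show "(XiCOMP P :: 'a fps) $ n = (Cs P * FP P) $ n" .
qed

lemma D_eq: "fps_X * fps_deriv (FP P :: 'a fps) = fps_X * (fps_deriv (Cs P) * FP P)"
proof -
  have D: "(fps_X * fps_deriv A) $ n = of_nat n * A $ n" for A :: "'a fps" and n
    by (cases n) (simp_all add: algebra_simps)
  show ?thesis
  proof (rule fps_ext)
    fix n
    have "(fps_X * fps_deriv (FP P :: 'a fps)) $ n = of_nat (n * aa P n) * natinv (fact n)"
      unfolding D FP_nth by (simp add: mult.assoc)
    also have "\<dots> = (\<Sum>k\<le>n. of_nat ((n choose k) * (k * (cc P k * aa P (n - k)))) * natinv (fact n))"
      unfolding ident2 by (simp add: sum_distrib_right)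
    also have "\<dots> = (\<Sum>k\<le>n. (fps_X * fps_deriv (Cs P)) $ k * FP P $ (n - k))"
    proof (rule sum.cong[OF refl])
      fix k assume "k \<in> {..n}"
      then have "of_nat (k * cc P k) * (natinv (fact k) :: 'a) * (of_nat (aa P (n - k)) * natinv (fact (n - k)))
          = of_nat ((n choose k) * ((k * cc P k) * aa P (n - k))) * natinv (fact n)"
        by (intro term_eq) simp
      then show "of_nat ((n choose k) * (k * (cc P k * aa P (n - k)))) * natinv (fact n)
          = (fps_X * fps_deriv (Cs P)) $ k * FP P $ (n - k)"
        unfolding D Cs_def FP_nth by (simp add: ac_simps)
    qed
    also have "\<dots> = (fps_X * fps_deriv (Cs P) * FP P) $ n" by (simp add: fps_mult_nth atLeast0AtMost)
    finally show "(fps_X * fps_deriv (FP P :: 'a fps)) $ n = (fps_X * (fps_deriv (Cs P) * FP P)) $ n"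
      by (simp add: mult.assoc)
  qed
qed

lemma X_cancel: "fps_X * (A :: 'a fps) = fps_X * B \<Longrightarrow> A = B"
proof (rule fps_ext)
  fix n assume "fps_X * A = fps_X * B"
  then have "(fps_X * A) $ Suc n = (fps_X * B) $ Suc n" by simp
  then show "A $ n = B $ n" by simp
qed

lemma FP0: "(FP P :: 'a fps) $ 0 = 1"
proof -
  have "Pfuns P 0 = {\<lambda>_. undefined}" unfolding Pfuns_def by auto
  then show ?thesis unfolding FP_def using ni[of 1] by simp
qed

theorem main: "(XiCOMP P :: 'a fps) = FP P * fps_ln1 (FP P)"
proof -
  let ?F = "FP P :: 'a fps" and ?L = "fps_ln1 (FP P) :: 'a fps" and ?C = "Cs P"
  have dF: "fps_deriv ?F = fps_deriv ?C * ?F" using X_cancel[OF D_eq] .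
  have dL: "?F * fps_deriv ?L = fps_deriv ?F"
    by (rule ln1_deriv[OF FP0]) (rule ni)
  have "?F * (fps_deriv ?L - fps_deriv ?C) = 0" using dF dL by (simp add: algebra_simps)
  moreover have "?F * fps_right_inverse ?F 1 = 1" by (rule fps_right_inverse) (simp add: FP0)
  ultimately have "fps_deriv ?L - fps_deriv ?C = 0"
  proof -
    assume h1: "?F * (fps_deriv ?L - fps_deriv ?C) = 0" and h2: "?F * fps_right_inverse ?F 1 = 1"
    have "fps_deriv ?L - fps_deriv ?C = (fps_deriv ?L - fps_deriv ?C) * (?F * fps_right_inverse ?F 1)"
      using h2 by simp
    also have "\<dots> = (?F * (fps_deriv ?L - fps_deriv ?C)) * fps_right_inverse ?F 1"
      by (simp only: mult.assoc mult.commute mult.left_commute)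
    also have "\<dots> = 0" using h1 by simp
    finally show ?thesis .
  qed
  then have dd: "fps_deriv ?L = fps_deriv ?C" by simp
  have "?L = ?C"
  proof (rule fps_ext)
    fix n show "?L $ n = ?C $ n"
    proof (cases n)
      case 0
      have "cc P 0 = 0" unfolding cc_def CF_def conn_def by simp
      then show ?thesis using 0 by (simp add: fps_ln1_def Cs_def)
    next
      case (Suc m)
      have "of_nat (Suc m) * ?L $ Suc m = of_nat (Suc m) * ?C $ Suc m"
        using arg_cong[OF dd, of "\<lambda>A. A $ m"] by simp
      then have "natinv (Suc m) * (of_nat (Suc m) * ?L $ Suc m) = natinv (Suc m) * (of_nat (Suc m) * ?C $ Suc m)"
        by simp
      then show ?thesis using ni[of "Suc m"] Suc by (simp add: mult.assoc[symmetric] mult.commute[of "natinv (Suc m)"])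
    qed
  qed
  then show ?thesis using Xi_eq by (simp add: mult.commute)
qed

end



theorem theorem5p8:
  fixes P :: "nat set"
  assumes "\<And>k::nat. k > 0 \<Longrightarrow> \<exists>x::'a::comm_ring_1. of_nat k * x = 1"
  shows "(XiCOMP P :: 'a fps) = FP P * fps_ln1 (FP P)"
  by (rule main[OF assms])

end
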